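(* Let $D\ge1$ and let $\mathcal{F}$ be a collection of pairwise non-overlapping $D$-simplices on $\gamma_D$ whose vertex sets have union exactly $A$, $|A|=n$, and suppose $\mathcal{F}$ is non-extendable. Then there is a collection $\mathcal{F}'\supseteq\mathcal{F}$ of pairwise non-overlapping $D$-simplices on $\gamma_D$ whose vertex sets have union a set of exactly $n+1$ points of $\gamma_D$, such that $\mathcal{F}'$ is non-extendable.
   Context: $\gamma_D=\{(t,t^2,\dots,t^D):t\in\mathbb{R}\}$. A $D$-simplex on $\gamma_D$ is $\mathrm{conv}(\sigma)$ for $\sigma\subseteq\gamma_D$, $|\sigma|=D+1$. Simplices overlap if $\mathrm{conv}(\sigma)\cap\mathrm{conv}(\tau)\supsetneq\mathrm{conv}(\sigma\cap\tau)$. A collection of simplices on $\gamma_D$ whose vertex sets have union $A$ is non-extendable if there is no triangulation of $\mathrm{conv}(A)$ (geometric simplicial complex with union $\mathrm{conv}(A)$) all of whose vertices lie in $A$ and which contains every simplex of the collection. *)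

theory Defs
  imports "HOL-Analysis.Analysis"
begin

text \<open>The ambient space is real^'n with D = CARD('n) (so D >= 1 automatically).
  The coordinates are indexed by 'n via a fixed bijection onto {0..<D};
  coordinate idx i carries the power t^(idx i + 1).\<close>

definition coord_idx :: "'n::finite \<Rightarrow> nat" where
  "coord_idx = (SOME f. bij_betw f (UNIV :: 'n set) {..<CARD('n)})"

definition moment :: "real \<Rightarrow> real ^ 'n::finite" where
  "moment t = (\<chi> i. t ^ Suc (coord_idx i))"

definition moment_curve :: "(real ^ 'n::finite) set" where
  "moment_curve = range moment"

definition curve_simplex :: "(real ^ 'n::finite) set \<Rightarrow> bool" where
  "curve_simplex \<sigma> \<longleftrightarrow> \<sigma> \<subseteq> moment_curve \<and> finite \<sigma> \<and> card \<sigma> = CARD('n) + 1"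

definition overlap :: "(real ^ 'n::finite) set \<Rightarrow> (real ^ 'n) set \<Rightarrow> bool" where
  "overlap \<sigma> \<tau> \<longleftrightarrow> convex hull (\<sigma> \<inter> \<tau>) \<subset> convex hull \<sigma> \<inter> convex hull \<tau>"

definition pairwise_nonoverlapping :: "(real ^ 'n::finite) set set \<Rightarrow> bool" where
  "pairwise_nonoverlapping F \<longleftrightarrow> (\<forall>\<sigma>\<in>F. \<forall>\<tau>\<in>F. \<sigma> \<noteq> \<tau> \<longrightarrow> \<not> overlap \<sigma> \<tau>)"

definition non_extendable :: "(real ^ 'n::finite) set set \<Rightarrow> bool" where
  "non_extendable F \<longleftrightarrow>
     \<not> (\<exists>T. simplicial_complex T \<and> \<Union>T = convex hull (\<Union>F) \<and>
            (\<forall>S\<in>T. \<forall>v. v extreme_point_of S \<longrightarrow> v \<in> \<Union>F) \<and>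
            (\<forall>\<sigma>\<in>F. convex hull \<sigma> \<in> T))"

end

theory Submission
  imports Defs
begin

lemma coord_idx_bij: "bij_betw (coord_idx :: 'n::finite \<Rightarrow> nat) UNIV {..<CARD('n)}"
proof -
  have "\<exists>f. bij_betw f (UNIV::'n set) {..<CARD('n)}"
    using ex_bij_betw_finite_nat[of "UNIV::'n set"] by (simp add: lessThan_atLeast0)
  then show ?thesis unfolding coord_idx_def by (rule someI_ex)
qed

lemma coord_idx_lt: "coord_idx (i::'n::finite) < CARD('n)"
  using bij_betw_apply[OF coord_idx_bij, of i] by simp

lemma coord_idx_inj: "inj (coord_idx :: 'n::finite \<Rightarrow> nat)"
  using coord_idx_bij bij_betw_def by blast

lemma coord_idx_surj: "k < CARD('n) \<Longrightarrow> \<exists>i::'n::finite. coord_idx i = k"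
  using coord_idx_bij[where 'n='n] unfolding bij_betw_def by (metis imageE lessThan_iff)

lemma moment_inner: "a \<bullet> (moment t :: real^'n::finite) = (\<Sum>i\<in>UNIV. a$i * t^Suc(coord_idx i))"
  by (simp add: inner_vec_def moment_def)

lemma curve_roots:
  fixes a :: "real^'n::finite"
  assumes "a \<noteq> 0"
  shows "finite {t. a \<bullet> moment t = b} \<and> card {t. a \<bullet> moment t = b} \<le> CARD('n)"
proof -
  let ?D = "CARD('n)"
  let ?inv = "inv_into (UNIV::'n set) coord_idx"
  have bij: "bij_betw (coord_idx :: 'n \<Rightarrow> nat) UNIV {..<?D}" by (rule coord_idx_bij)
  define c where "c = (\<lambda>k. if k = 0 then - b else if k - 1 < ?D then a $ (?inv (k - 1)) else 0)"
  have eq: "(\<Sum>k\<le>?D. c k * t^k) = a \<bullet> moment t - b" for t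
  proof -
    have "(\<Sum>k\<le>?D. c k * t^k) = c 0 + (\<Sum>j<?D. c (Suc j) * t^Suc j)"
    proof -
      obtain m where m: "?D = Suc m" using zero_less_card_finite not0_implies_Suc by blast
      show ?thesis unfolding m sum.atMost_Suc_shift lessThan_Suc_atMost by simp
    qed
    also have "(\<Sum>j<?D. c (Suc j) * t^Suc j) = (\<Sum>j\<in>{..<?D}. a $ (?inv j) * t^Suc j)"
      by (simp add: c_def)
    also have "\<dots> = (\<Sum>i::'n\<in>UNIV. a $ (?inv (coord_idx i)) * t^Suc (coord_idx i))"
      using sum.reindex_bij_betw[OF bij, of "\<lambda>j. a $ (?inv j) * t^Suc j"] by (rule sym)
    also have "\<dots> = a \<bullet> moment t"
      using bij by (simp add: moment_inner bij_betw_def)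
    finally show ?thesis by (simp add: c_def)
  qed
  obtain i where i: "a $ i \<noteq> 0" using assms by (metis vec_eq_iff zero_index)
  have ck: "c (Suc (coord_idx i)) \<noteq> 0" "Suc (coord_idx i) \<le> ?D"
    using i coord_idx_lt[of i] coord_idx_inj[where 'n='n] by (auto simp: c_def)
  have set: "{t. a \<bullet> moment t = b} = {t. (\<Sum>k\<le>?D. c k * t^k) = 0}"
    using eq by auto
  show ?thesis unfolding set
    using polyfun_roots_finite[of c "Suc (coord_idx i)", OF ck] polyfun_roots_card[of c "Suc (coord_idx i)", OF ck] by auto
qed


lemma curve_hyperplane_card:
  fixes B :: "(real^'n::finite) set"
  assumes "B \<subseteq> moment_curve" "a \<noteq> 0" "\<forall>x\<in>B. a \<bullet> x = b"
  shows "finite B \<and> card B \<le> CARD('n)"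
proof -
  have sub: "B \<subseteq> moment ` {t. a \<bullet> moment t = b}"
    using assms unfolding moment_curve_def by auto
  have fin: "finite {t. a \<bullet> moment t = b}" and cd: "card {t. a \<bullet> moment t = b} \<le> CARD('n)"
    using curve_roots[OF assms(2), of b] by auto
  have "finite B" using sub fin finite_subset by blast
  moreover have "card B \<le> card (moment ` {t. a \<bullet> moment t = b} :: (real^'n) set)"
    using sub fin by (meson card_mono finite_imageI)
  moreover have "card (moment ` {t. (a::real^'n) \<bullet> moment t = b} :: (real^'n) set) \<le> card {t. a \<bullet> moment t = b}"
    by (rule card_image_le[OF fin])
  ultimately show ?thesis using cd by linarith
qed

lemma curve_full_dim:
  fixes \<sigma> :: "(real^'n::finite) set"
  assumes "\<sigma> \<subseteq> moment_curve" "finite \<sigma>" "card \<sigma> = CARD('n) + 1"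
  shows "affine hull \<sigma> = UNIV"
proof -
  have "aff_dim \<sigma> = int DIM(real^'n)"
  proof (rule ccontr)
    assume "aff_dim \<sigma> \<noteq> int DIM(real^'n)"
    then have "aff_dim \<sigma> < int DIM(real^'n)" using aff_dim_le_DIM[of \<sigma>] by linarith
    then obtain a b where ab: "a \<noteq> 0" "\<sigma> \<subseteq> {x. a \<bullet> x = b}"
      by (rule aff_lowdim_subset_hyperplane)
    then have "card \<sigma> \<le> CARD('n)" using curve_hyperplane_card[OF assms(1) ab(1), of b] by auto
    then show False using assms by simp
  qed
  then show ?thesis using aff_dim_eq_full by blast
qed

lemma hull_cut:
  fixes B :: "'a::euclidean_space set"
  assumes "finite B" "\<forall>x\<in>B. a \<bullet> x \<le> b" "z \<in> convex hull B" "a \<bullet> z = b"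
  shows "z \<in> convex hull {x\<in>B. a \<bullet> x = b}"
proof -
  have le: "convex hull B \<subseteq> {x. a \<bullet> x \<le> b}"
    using assms(2) by (intro hull_minimal) (auto simp: convex_halfspace_le)
  have face: "(convex hull B \<inter> {x. a \<bullet> x = b}) face_of convex hull B"
    using le by (intro face_of_Int_supporting_hyperplane_le) auto
  obtain S' where S': "S' \<subseteq> B" "convex hull B \<inter> {x. a \<bullet> x = b} = convex hull S'"
    using face_of_convex_hull_subset[OF finite_imp_compact[OF assms(1)] face] by blast
  have "S' \<subseteq> {x\<in>B. a \<bullet> x = b}"
    using S' hull_subset[of S' convex] by auto
  then have "convex hull S' \<subseteq> convex hull {x\<in>B. a \<bullet> x = b}" by (rule hull_mono)
  then show ?thesis using S'(2) assms(3,4) by auto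
qed

lemma hyperplane_hull:
  assumes "\<forall>x\<in>\<tau>. a \<bullet> x = b" "y \<in> convex hull \<tau>"
  shows "a \<bullet> y = b"
proof -
  have "convex hull \<tau> \<subseteq> {x. a \<bullet> x = b}"
    using assms(1) by (intro hull_minimal) (auto simp: convex_hyperplane)
  then show ?thesis using assms(2) by auto
qed

lemma halfspace_hull:
  assumes "\<forall>x\<in>\<tau>. a \<bullet> x \<le> b" "y \<in> convex hull \<tau>"
  shows "a \<bullet> y \<le> b"
proof -
  have "convex hull \<tau> \<subseteq> {x. a \<bullet> x \<le> b}"
    using assms(1) by (intro hull_minimal) (auto simp: convex_halfspace_le)
  then show ?thesis using assms(2) by auto
qed

lemma cone_decomp:
  fixes p :: "'a::euclidean_space"
  assumes "\<tau> \<noteq> {}" "z \<in> convex hull (insert p \<tau>)"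
  obtains u v y where "u \<ge> 0" "v \<ge> 0" "u + v = 1" "y \<in> convex hull \<tau>" "z = u *\<^sub>R p + v *\<^sub>R y"
  using assms convex_hull_insert[OF assms(1), of p] by auto

lemma cone_cut:
  fixes p :: "'a::euclidean_space"
  assumes "\<tau> \<noteq> {}" "\<forall>x\<in>\<tau>. a \<bullet> x = b" "a \<bullet> p > b" "z \<in> convex hull (insert p \<tau>)" "a \<bullet> z \<le> b"
  shows "z \<in> convex hull \<tau>"
proof -
  obtain u v y where uv: "u \<ge> 0" "v \<ge> 0" "u + v = 1" "y \<in> convex hull \<tau>" "z = u *\<^sub>R p + v *\<^sub>R y"
    using cone_decomp[OF assms(1,4)] by blast
  have ay: "a \<bullet> y = b" using hyperplane_hull[OF assms(2) uv(4)] .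
  have "a \<bullet> z = u * (a \<bullet> p) + v * b" using uv(5) ay by (simp add: inner_add_right)
  then have "u * (a \<bullet> p) + v * b \<le> (u + v) * b" using assms(5) uv(3) by simp
  then have "u * (a \<bullet> p - b) \<le> 0" by (simp add: algebra_simps)
  then have "u = 0" using uv(1) assms(3) by (smt (verit) mult_pos_pos)
  then show ?thesis using uv by simp
qed

lemma no_overlapI:
  assumes "convex hull \<sigma> \<inter> convex hull \<tau> \<subseteq> convex hull (\<sigma> \<inter> \<tau>)"
  shows "\<not> overlap \<sigma> \<tau>"
  using assms unfolding overlap_def by blast


lemma visible_facet:
  fixes A :: "(real^'n::finite) set"
  assumes A: "finite A" "A \<subseteq> moment_curve" and full: "affine hull A = UNIV"
    and p: "p \<notin> convex hull A" and x: "x \<in> convex hull A"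
  shows "\<exists>a b y. a \<noteq> 0 \<and> (\<forall>z\<in>A. a \<bullet> z \<le> b) \<and> a \<bullet> p > b \<and>
           card {z\<in>A. a \<bullet> z = b} = CARD('n) \<and>
           y \<in> convex hull {z\<in>A. a \<bullet> z = b} \<and> y \<in> closed_segment p x"
proof -
  define K where "K = convex hull A"
  have polyK: "polyhedron K" unfolding K_def using A(1) by (rule polyhedron_convex_hull)
  have affK: "affine hull K = UNIV" unfolding K_def using full by simp
  obtain FF where FF: "finite FF" "K = affine hull K \<inter> \<Inter>FF"
      "\<forall>h\<in>FF. \<exists>a b. a \<noteq> 0 \<and> h = {x. a \<bullet> x \<le> b} \<and> (\<forall>x \<in> affine hull K. (x + a) \<in> affine hull K)"
      "\<forall>F'. F' \<subset> FF \<longrightarrow> K \<subset> affine hull K \<inter> \<Inter>F'"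
    using polyK unfolding polyhedron_Int_affine_parallel_minimal by blast
  obtain av bv where avb: "\<And>h. h \<in> FF \<Longrightarrow> av h \<noteq> 0 \<and> h = {x. av h \<bullet> x \<le> bv h}"
    using FF(3) by metis
  have facet: "C facet_of K \<longleftrightarrow> (\<exists>h. h \<in> FF \<and> C = K \<inter> {x. av h \<bullet> x = bv h})" for C
    by (rule facet_of_polyhedron_explicit[OF FF(1) FF(2) avb FF(4)[rule_format]])
  have Keq: "K = \<Inter>FF" using FF(2) affK by simp
  have xK: "x \<in> K" using x K_def by simp
  define I where "I = {h\<in>FF. av h \<bullet> p > bv h}"
  have "p \<notin> K" using p K_def by simp
  then obtain h1 where "h1 \<in> FF" "p \<notin> h1" using Keq by blast
  then have h1I: "h1 \<in> I" using avb[of h1] I_def by auto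
  have finI: "finite I" using FF(1) I_def by simp
  have xle: "av h \<bullet> x \<le> bv h" if "h \<in> FF" for h
    using xK Keq that avb[OF that] by blast
  define s where "s h = (av h \<bullet> p - bv h) / (av h \<bullet> p - av h \<bullet> x)" for h
  define M where "M = Max (s ` I)"
  have "M \<in> s ` I" unfolding M_def using finI h1I by (intro Max_in) auto
  then obtain h0 where h0I: "h0 \<in> I" and sh0: "s h0 = M" by auto
  have Mge: "s h \<le> M" if "h \<in> I" for h unfolding M_def using finI that by (intro Max_ge) auto
  have h0F: "h0 \<in> FF" and h0p: "av h0 \<bullet> p > bv h0" using h0I I_def by auto
  have h0x: "av h0 \<bullet> x \<le> bv h0" using xle[OF h0F] .
  have Mdef: "M = (av h0 \<bullet> p - bv h0) / (av h0 \<bullet> p - av h0 \<bullet> x)"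
    using sh0 s_def by simp
  have d1: "av h0 \<bullet> p - bv h0 > 0" using h0p by simp
  have d2: "av h0 \<bullet> p - bv h0 \<le> av h0 \<bullet> p - av h0 \<bullet> x" using h0x by simp
  have Mpos: "M > 0" "M \<le> 1"
    unfolding Mdef using d1 d2 by (auto intro!: divide_pos_pos simp: divide_le_eq_1)
  define y where "y = (1 - M) *\<^sub>R p + M *\<^sub>R x"
  have yseg: "y \<in> closed_segment p x"
    unfolding y_def closed_segment_def using Mpos by auto
  have inner_y: "c \<bullet> y = (1 - M) * (c \<bullet> p) + M * (c \<bullet> x)" for c
    unfolding y_def by (simp add: inner_add_right)
  have yK: "y \<in> K"
  proof -
    have "y \<in> h" if hF: "h \<in> FF" for h
    proof -
      have "av h \<bullet> y \<le> bv h"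
      proof (cases "h \<in> I")
        case True
        then have P: "av h \<bullet> p > bv h" using I_def by auto
        have X: "av h \<bullet> x \<le> bv h" using xle[OF hF] .
        have "s h \<le> M" using Mge[OF True] .
        then have "(av h \<bullet> p - bv h) \<le> M * (av h \<bullet> p - av h \<bullet> x)"
          using P X unfolding s_def by (simp add: divide_simps)
        then show ?thesis unfolding inner_y by (simp add: algebra_simps)
      next
        case False
        then have P: "av h \<bullet> p \<le> bv h" using I_def hF by auto
        have X: "av h \<bullet> x \<le> bv h" using xle[OF hF] .
        have "(1 - M) * (av h \<bullet> p) \<le> (1 - M) * bv h"
          using P Mpos by (intro mult_left_mono) auto
        moreover have "M * (av h \<bullet> x) \<le> M * bv h"
          using X Mpos by (intro mult_left_mono) auto
        ultimately show ?thesis unfolding inner_y by (simp add: algebra_simps)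
      qed
      then show ?thesis using avb[OF hF] by auto
    qed
    then show ?thesis using Keq by blast
  qed
  have yH: "av h0 \<bullet> y = bv h0"
  proof -
    have "M * (av h0 \<bullet> p - av h0 \<bullet> x) = av h0 \<bullet> p - bv h0"
      using sh0[symmetric] h0p h0x unfolding s_def by (simp add: divide_simps)
    then show ?thesis unfolding inner_y by (simp add: algebra_simps)
  qed
  define \<tau> where "\<tau> = {z\<in>A. av h0 \<bullet> z = bv h0}"
  have Ale: "\<forall>z\<in>A. av h0 \<bullet> z \<le> bv h0"
  proof
    fix z assume "z \<in> A"
    then have "z \<in> K" unfolding K_def by (simp add: hull_inc)
    then show "av h0 \<bullet> z \<le> bv h0" using Keq h0F avb[OF h0F] by blast
  qed
  let ?C = "K \<inter> {x. av h0 \<bullet> x = bv h0}"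
  have Cfacet: "?C facet_of K" using facet h0F by blast
  have CsubT: "?C \<subseteq> convex hull \<tau>"
  proof
    fix z assume "z \<in> ?C"
    then show "z \<in> convex hull \<tau>" unfolding \<tau>_def
      using hull_cut[OF A(1) Ale] K_def by auto
  qed
  have affKD: "aff_dim K = int CARD('n)"
    using affK aff_dim_eq_full[of K] by simp
  have affC: "aff_dim ?C = int CARD('n) - 1"
    using Cfacet affKD unfolding facet_of_def by simp
  have finT: "finite \<tau>" using A(1) \<tau>_def by simp
  have "aff_dim ?C \<le> aff_dim (convex hull \<tau>)" using CsubT by (rule aff_dim_subset)
  also have "\<dots> = aff_dim \<tau>" by (rule aff_dim_convex_hull)
  also have "\<dots> \<le> int (card \<tau>) - 1" by (rule aff_dim_le_card[OF finT])
  finally have ge: "card \<tau> \<ge> CARD('n)" using affC by simp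
  have tcurve: "\<tau> \<subseteq> moment_curve" using A(2) \<tau>_def by auto
  have thyp: "\<forall>z\<in>\<tau>. av h0 \<bullet> z = bv h0" by (simp add: \<tau>_def)
  have le: "card \<tau> \<le> CARD('n)"
    using curve_hyperplane_card[OF tcurve conjunct1[OF avb[OF h0F]] thyp] by blast
  have yT: "y \<in> convex hull \<tau>" using CsubT yK yH by blast
  have eqc: "card \<tau> = CARD('n)" using le ge by linarith
  have "av h0 \<noteq> 0 \<and> (\<forall>z\<in>A. av h0 \<bullet> z \<le> bv h0) \<and> av h0 \<bullet> p > bv h0 \<and>
           card \<tau> = CARD('n) \<and> y \<in> convex hull \<tau> \<and> y \<in> closed_segment p x"
    using avb[OF h0F] Ale h0p eqc yT yseg by blast
  then show ?thesis unfolding \<tau>_def by blast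
qed


lemma GF_cut:
  fixes A :: "'a::euclidean_space set"
  assumes "finite \<sigma>" "\<sigma> \<subseteq> A" "\<forall>z\<in>A. a \<bullet> z \<le> b" "a \<bullet> p > b" "\<tau> = {z\<in>A. a \<bullet> z = b}" "\<tau> \<noteq> {}"
  shows "convex hull \<sigma> \<inter> convex hull (insert p \<tau>) \<subseteq> convex hull (\<sigma> \<inter> insert p \<tau>)"
proof
  fix z assume z: "z \<in> convex hull \<sigma> \<inter> convex hull (insert p \<tau>)"
  have sle: "\<forall>x\<in>\<sigma>. a \<bullet> x \<le> b" using assms(2,3) by blast
  have "a \<bullet> z \<le> b" using halfspace_hull[OF sle] z by blast
  moreover have thyp: "\<forall>x\<in>\<tau>. a \<bullet> x = b" using assms(5) by simp
  ultimately have "z \<in> convex hull \<tau>" using cone_cut[OF assms(6) thyp assms(4)] z by blast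
  then have az: "a \<bullet> z = b" using hyperplane_hull[OF thyp] by blast
  have "z \<in> convex hull {x\<in>\<sigma>. a \<bullet> x = b}" using hull_cut[OF assms(1) sle] z az by blast
  moreover have "{x\<in>\<sigma>. a \<bullet> x = b} \<subseteq> \<sigma> \<inter> insert p \<tau>" using assms(2,5) by blast
  ultimately show "z \<in> convex hull (\<sigma> \<inter> insert p \<tau>)" using hull_mono by blast
qed

lemma GG_cut:
  fixes A :: "'a::euclidean_space set"
  assumes fin: "finite A"
    and t1: "\<tau>1 = {z\<in>A. a1 \<bullet> z = b1}" and t2: "\<tau>2 = {z\<in>A. a2 \<bullet> z = b2}"
    and le1: "\<forall>z\<in>A. a1 \<bullet> z \<le> b1" and le2: "\<forall>z\<in>A. a2 \<bullet> z \<le> b2"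
    and p1: "a1 \<bullet> p > b1" and p2: "a2 \<bullet> p > b2" and ne1: "\<tau>1 \<noteq> {}" and ne2: "\<tau>2 \<noteq> {}"
  shows "convex hull (insert p \<tau>1) \<inter> convex hull (insert p \<tau>2) \<subseteq> convex hull (insert p \<tau>1 \<inter> insert p \<tau>2)"
proof
  fix z assume z: "z \<in> convex hull (insert p \<tau>1) \<inter> convex hull (insert p \<tau>2)"
  obtain u1 v1 y1 where uv1: "u1 \<ge> 0" "v1 \<ge> 0" "u1 + v1 = 1" "y1 \<in> convex hull \<tau>1" "z = u1 *\<^sub>R p + v1 *\<^sub>R y1"
    using cone_decomp[OF ne1, of z p] z by blast
  obtain u2 v2 y2 where uv2: "u2 \<ge> 0" "v2 \<ge> 0" "u2 + v2 = 1" "y2 \<in> convex hull \<tau>2" "z = u2 *\<^sub>R p + v2 *\<^sub>R y2"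
    using cone_decomp[OF ne2, of z p] z by blast
  have h1: "\<forall>x\<in>\<tau>1. a1 \<bullet> x = b1" using t1 by simp
  have h2: "\<forall>x\<in>\<tau>2. a2 \<bullet> x = b2" using t2 by simp
  have l12: "\<forall>x\<in>\<tau>2. a1 \<bullet> x \<le> b1" using t2 le1 by simp
  have l21: "\<forall>x\<in>\<tau>1. a2 \<bullet> x \<le> b2" using t1 le2 by simp
  have y11: "a1 \<bullet> y1 = b1" using hyperplane_hull[OF h1 uv1(4)] .
  have y22: "a2 \<bullet> y2 = b2" using hyperplane_hull[OF h2 uv2(4)] .
  have y12: "a1 \<bullet> y2 \<le> b1" using halfspace_hull[OF l12 uv2(4)] .
  have y21: "a2 \<bullet> y1 \<le> b2" using halfspace_hull[OF l21 uv1(4)] .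
  have "u1 \<le> u2"
  proof -
    have "a1 \<bullet> z = u1 * (a1 \<bullet> p) + v1 * b1" using uv1(5) y11 by (simp add: inner_add_right)
    moreover have "a1 \<bullet> z = u2 * (a1 \<bullet> p) + v2 * (a1 \<bullet> y2)" using uv2(5) by (simp add: inner_add_right)
    moreover have "v2 * (a1 \<bullet> y2) \<le> v2 * b1" using y12 uv2(2) by (intro mult_left_mono)
    ultimately have "u1 * (a1 \<bullet> p) + v1 * b1 \<le> u2 * (a1 \<bullet> p) + v2 * b1" by linarith
    moreover have "v1 = 1 - u1" "v2 = 1 - u2" using uv1(3) uv2(3) by auto
    ultimately have "(u1 - u2) * (a1 \<bullet> p - b1) \<le> 0"
      by (simp add: algebra_simps)
    then show ?thesis using p1 by (smt (verit) mult_pos_pos)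
  qed
  moreover have "u2 \<le> u1"
  proof -
    have "a2 \<bullet> z = u2 * (a2 \<bullet> p) + v2 * b2" using uv2(5) y22 by (simp add: inner_add_right)
    moreover have "a2 \<bullet> z = u1 * (a2 \<bullet> p) + v1 * (a2 \<bullet> y1)" using uv1(5) by (simp add: inner_add_right)
    moreover have "v1 * (a2 \<bullet> y1) \<le> v1 * b2" using y21 uv1(2) by (intro mult_left_mono)
    ultimately have "u2 * (a2 \<bullet> p) + v2 * b2 \<le> u1 * (a2 \<bullet> p) + v1 * b2" by linarith
    moreover have "v1 = 1 - u1" "v2 = 1 - u2" using uv1(3) uv2(3) by auto
    ultimately have "(u2 - u1) * (a2 \<bullet> p - b2) \<le> 0"
      by (simp add: algebra_simps)
    then show ?thesis using p2 by (smt (verit) mult_pos_pos)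
  qed
  ultimately have u: "u1 = u2" by simp
  then have v: "v1 = v2" using uv1(3) uv2(3) by simp
  let ?H = "convex hull (insert p \<tau>1 \<inter> insert p \<tau>2)"
  have pH: "p \<in> ?H" by (simp add: hull_inc)
  show "z \<in> ?H"
  proof (cases "v1 = 0")
    case True
    then have "z = p" using uv1 by simp
    then show ?thesis using pH by simp
  next
    case False
    have "v1 *\<^sub>R y1 = v1 *\<^sub>R y2" using uv1(5) uv2(5) u v by (metis add_left_cancel)
    then have yy: "y1 = y2" using False by auto
    have finT1: "finite \<tau>1" using fin t1 by simp
    have "y1 \<in> convex hull {x\<in>\<tau>1. a2 \<bullet> x = b2}"
      using hull_cut[OF finT1 l21 uv1(4)] y22 yy by simp
    moreover have "{x\<in>\<tau>1. a2 \<bullet> x = b2} \<subseteq> insert p \<tau>1 \<inter> insert p \<tau>2" using t1 t2 by blast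
    ultimately have yH: "y1 \<in> ?H" using hull_mono by blast
    show ?thesis using uv1 pH yH convexD[OF convex_convex_hull] by metis
  qed
qed


theorem proposition4p2:
  fixes F :: "(real ^ 'n::finite) set set" and A :: "(real ^ 'n) set" and n :: nat
  assumes "\<forall>\<sigma>\<in>F. curve_simplex \<sigma>"
    and "pairwise_nonoverlapping F"
    and "\<Union>F = A" and "finite A" and "card A = n"
    and "non_extendable F"
  shows "\<exists>F'. F \<subseteq> F' \<and> (\<forall>\<sigma>\<in>F'. curve_simplex \<sigma>) \<and> pairwise_nonoverlapping F' \<and>
              finite (\<Union>F') \<and> card (\<Union>F') = n + 1 \<and> non_extendable F'"
proof -
  let ?D = "CARD('n)"
  have Dpos: "?D > 0" by simp
  have Fne: "F \<noteq> {}"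
  proof
    assume "F = {}"
    then have "\<not> non_extendable F" unfolding non_extendable_def
      by (auto simp: simplicial_complex_def intro!: exI[of _ "{}"])
    then show False using assms(6) by simp
  qed
  then obtain \<sigma>0 where s0: "\<sigma>0 \<in> F" by blast
  have cs0: "\<sigma>0 \<subseteq> moment_curve" "finite \<sigma>0" "card \<sigma>0 = ?D + 1"
    using assms(1) s0 unfolding curve_simplex_def by auto
  have s0A: "\<sigma>0 \<subseteq> A" using assms(3) s0 by blast
  have Acurve: "A \<subseteq> moment_curve" using assms(1,3) unfolding curve_simplex_def by blast
  have full: "affine hull A = UNIV"
    using curve_full_dim[OF cs0] hull_mono[OF s0A, of affine] by auto
  obtain a0 where a0: "a0 \<in> A" using cs0 s0A by fastforce
  obtain k1 :: 'n where k1: "coord_idx k1 = 0" using coord_idx_surj[where 'n='n, of 0] Dpos by blast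
  obtain k0 :: 'n where k0: "coord_idx k0 = ?D - 1" using coord_idx_surj[where 'n='n, of "?D - 1"] Dpos by auto
  have momk1: "(moment t :: real^'n) $ k1 = t" for t by (simp add: moment_def k1)
  have momk0: "(moment t :: real^'n) $ k0 = t ^ ?D" for t
  proof -
    have "Suc (?D - 1) = ?D" using Dpos by simp
    then show ?thesis by (simp add: moment_def k0 del: power_Suc)
  qed
  define t0 where "t0 = 1 + (\<Sum>z\<in>A. \<bar>z $ k1\<bar>)"
  define p where "p = (moment t0 :: real^'n)"
  have t0pos: "t0 > 0" unfolding t0_def by (smt (verit) sum_nonneg abs_ge_zero)
  have Alt: "z $ k0 < t0 ^ ?D" if z: "z \<in> A" for z
  proof -
    obtain t where t: "z = moment t" using z Acurve unfolding moment_curve_def by blast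
    have "\<bar>t\<bar> \<le> (\<Sum>z\<in>A. \<bar>z $ k1\<bar>)"
      using member_le_sum[of z A "\<lambda>z. \<bar>z $ k1\<bar>"] z assms(4) t momk1 by simp
    then have "\<bar>t\<bar> < t0" unfolding t0_def by simp
    then have "\<bar>t\<bar> ^ ?D < t0 ^ ?D" using Dpos by (intro power_strict_mono) auto
    moreover have "t ^ ?D \<le> \<bar>t\<bar> ^ ?D" by (metis abs_ge_self power_abs)
    ultimately show ?thesis using t momk0 by simp
  qed
  have pnot: "p \<notin> convex hull A"
  proof
    assume pin: "p \<in> convex hull A"
    have e: "axis k0 (1::real) \<bullet> x = x $ k0" for x :: "real^'n"
      by (simp add: cart_eq_inner_axis inner_commute)
    have cvx: "convex {x::real^'n. x $ k0 < t0 ^ ?D}"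
      using convex_halfspace_lt[of "axis k0 (1::real)" "t0 ^ ?D"] by (simp add: e)
    have "convex hull A \<subseteq> {x. x $ k0 < t0 ^ ?D}"
      using Alt cvx by (intro hull_minimal) auto
    then have "p $ k0 < t0 ^ ?D" using pin by auto
    then show False using momk0 p_def by simp
  qed
  have pA: "p \<notin> A"
  proof
    assume "p \<in> A"
    then have "p \<in> convex hull A" by (rule hull_inc)
    then show False using pnot by simp
  qed
  have pcurve: "p \<in> moment_curve" unfolding p_def moment_curve_def by simp
  define vis where "vis \<tau> \<longleftrightarrow> (\<exists>a b. a \<noteq> 0 \<and> (\<forall>z\<in>A. a \<bullet> z \<le> b) \<and> a \<bullet> p > b \<and>
                                 \<tau> = {z\<in>A. a \<bullet> z = b} \<and> card \<tau> = ?D)" for \<tau>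
  define G where "G = insert p ` {\<tau>. vis \<tau>}"
  define F' where "F' = F \<union> G"
  have visA: "\<tau> \<subseteq> A" "finite \<tau>" "card \<tau> = ?D" "\<tau> \<noteq> {}" "p \<notin> \<tau>" if vt: "vis \<tau>" for \<tau>
  proof -
    obtain a b where ab: "\<tau> = {z\<in>A. a \<bullet> z = b}" "card \<tau> = ?D" using vt unfolding vis_def by blast
    show "\<tau> \<subseteq> A" using ab(1) by blast
    show fin: "finite \<tau>" using ab(1) assms(4) by simp
    show "card \<tau> = ?D" using ab(2) .
    show "\<tau> \<noteq> {}" using ab(2) Dpos by auto
    show "p \<notin> \<tau>" using ab(1) pA by blast
  qed
  obtain \<tau>0 where vis0: "vis \<tau>0"
    using visible_facet[OF assms(4) Acurve full pnot hull_inc[OF a0]] unfolding vis_def by blast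
  have UG: "\<Union>G = insert p (\<Union>{\<tau>. vis \<tau>})" unfolding G_def using vis0 by blast
  have UF': "\<Union>F' = insert p A"
  proof -
    have "\<Union>{\<tau>. vis \<tau>} \<subseteq> A" using visA by blast
    then show ?thesis unfolding F'_def using UG assms(3) by auto
  qed
  have curveF': "\<forall>\<sigma>\<in>F'. curve_simplex \<sigma>"
  proof
    fix \<sigma> assume "\<sigma> \<in> F'"
    then consider "\<sigma> \<in> F" | \<tau> where "vis \<tau>" "\<sigma> = insert p \<tau>" unfolding F'_def G_def by blast
    then show "curve_simplex \<sigma>"
    proof cases
      case 1 then show ?thesis using assms(1) by blast
    next
      case 2
      then show ?thesis using visA[OF 2(1)] Acurve pcurve unfolding curve_simplex_def by auto
    qed
  qed
  have visE: "\<exists>a b. a \<noteq> 0 \<and> (\<forall>z\<in>A. a \<bullet> z \<le> b) \<and> a \<bullet> p > b \<and> \<tau> = {z\<in>A. a \<bullet> z = b}"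
    if "vis \<tau>" for \<tau> using that unfolding vis_def by blast
  have nonov: "pairwise_nonoverlapping F'"
    unfolding pairwise_nonoverlapping_def
  proof (intro ballI impI)
    fix \<sigma>1 \<sigma>2 assume s1: "\<sigma>1 \<in> F'" and s2: "\<sigma>2 \<in> F'" and ne: "\<sigma>1 \<noteq> \<sigma>2"
    have GF: "\<not> overlap \<sigma> (insert p \<tau>) \<and> \<not> overlap (insert p \<tau>) \<sigma>" if hyps: "\<sigma> \<in> F" "vis \<tau>" for \<sigma> \<tau>
    proof -
      obtain a b where ab: "a \<noteq> 0" "\<forall>z\<in>A. a \<bullet> z \<le> b" "a \<bullet> p > b" "\<tau> = {z\<in>A. a \<bullet> z = b}"
        using visE[OF hyps(2)] by blast
      have "finite \<sigma>" "\<sigma> \<subseteq> A" using hyps(1) assms(1,3) unfolding curve_simplex_def by auto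
      from GF_cut[OF this ab(2,3,4) visA(4)[OF hyps(2)]]
      have c: "convex hull \<sigma> \<inter> convex hull (insert p \<tau>) \<subseteq> convex hull (\<sigma> \<inter> insert p \<tau>)" .
      then have c': "convex hull (insert p \<tau>) \<inter> convex hull \<sigma> \<subseteq> convex hull (insert p \<tau> \<inter> \<sigma>)"
        by (simp add: Int_commute)
      show ?thesis using no_overlapI[OF c] no_overlapI[OF c'] by blast
    qed
    have GGc: "\<not> overlap (insert p \<tau>1) (insert p \<tau>2)" if hyps: "vis \<tau>1" "vis \<tau>2" for \<tau>1 \<tau>2
    proof -
      obtain a1 b1 where ab1: "a1 \<noteq> 0" "\<forall>z\<in>A. a1 \<bullet> z \<le> b1" "a1 \<bullet> p > b1" "\<tau>1 = {z\<in>A. a1 \<bullet> z = b1}"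
        using visE[OF hyps(1)] by blast
      obtain a2 b2 where ab2: "a2 \<noteq> 0" "\<forall>z\<in>A. a2 \<bullet> z \<le> b2" "a2 \<bullet> p > b2" "\<tau>2 = {z\<in>A. a2 \<bullet> z = b2}"
        using visE[OF hyps(2)] by blast
      show ?thesis
        by (rule no_overlapI, rule GG_cut[OF assms(4) ab1(4) ab2(4) ab1(2) ab2(2) ab1(3) ab2(3)
              visA(4)[OF hyps(1)] visA(4)[OF hyps(2)]])
    qed
    show "\<not> overlap \<sigma>1 \<sigma>2"
    proof (cases "\<sigma>1 \<in> F")
      case True
      show ?thesis
      proof (cases "\<sigma>2 \<in> F")
        case True
        then show ?thesis using \<open>\<sigma>1 \<in> F\<close> ne assms(2) unfolding pairwise_nonoverlapping_def by blast
      next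
        case False
        then obtain \<tau> where "vis \<tau>" "\<sigma>2 = insert p \<tau>" using s2 unfolding F'_def G_def by blast
        then show ?thesis using GF[OF \<open>\<sigma>1 \<in> F\<close>] by blast
      qed
    next
      case False
      then obtain \<tau>1 where t1: "vis \<tau>1" "\<sigma>1 = insert p \<tau>1" using s1 unfolding F'_def G_def by blast
      show ?thesis
      proof (cases "\<sigma>2 \<in> F")
        case True
        then show ?thesis using GF[OF True t1(1)] t1(2) by blast
      next
        case False
        then obtain \<tau>2 where "vis \<tau>2" "\<sigma>2 = insert p \<tau>2" using s2 unfolding F'_def G_def by blast
        then show ?thesis using GGc[OF t1(1)] t1(2) by blast
      qed
    qed
  qed
  have nonext: "non_extendable F'"
    unfolding non_extendable_def
  proof
    assume "\<exists>T. simplicial_complex T \<and> \<Union>T = convex hull \<Union>F' \<and>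
            (\<forall>S\<in>T. \<forall>v. v extreme_point_of S \<longrightarrow> v \<in> \<Union>F') \<and> (\<forall>\<sigma>\<in>F'. convex hull \<sigma> \<in> T)"
    then obtain T' where T': "simplicial_complex T'" "\<Union>T' = convex hull (insert p A)"
        "\<forall>S\<in>T'. \<forall>v. v extreme_point_of S \<longrightarrow> v \<in> insert p A" "\<forall>\<sigma>\<in>F'. convex hull \<sigma> \<in> T'"
      unfolding UF' by blast
    define T where "T = {S\<in>T'. p \<notin> S}"
    have scT: "simplicial_complex T"
      using T'(1) unfolding simplicial_complex_def T_def
      by (auto dest: face_of_imp_subset)
    have simpl: "convex S \<and> compact S" if "S \<in> T'" for S
      using T'(1) that unfolding simplicial_complex_def by (meson convex_simplex compact_simplex)
    have extT: "\<forall>S\<in>T. \<forall>v. v extreme_point_of S \<longrightarrow> v \<in> \<Union>F"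
    proof (intro ballI allI impI)
      fix S v assume "S \<in> T" "v extreme_point_of S"
      then show "v \<in> \<Union>F" using T'(3) assms(3) unfolding T_def extreme_point_of_def by auto
    qed
    have sub1: "\<Union>T \<subseteq> convex hull A"
    proof
      fix x assume "x \<in> \<Union>T"
      then obtain S where S: "S \<in> T" "x \<in> S" by blast
      have "S = convex hull {v. v extreme_point_of S}"
        using simpl S(1) T_def Krein_Milman_Minkowski by auto
      moreover have "{v. v extreme_point_of S} \<subseteq> A" using extT S(1) assms(3) by auto
      ultimately show "x \<in> convex hull A" using S(2) hull_mono by blast
    qed
    have sub2: "convex hull A \<subseteq> \<Union>T"
    proof
      fix x assume x: "x \<in> convex hull A"
      have "x \<in> convex hull (insert p A)" using x hull_mono[of A "insert p A"] by blast
      then obtain S where S: "S \<in> T'" "x \<in> S" using T'(2) by blast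
      show "x \<in> \<Union>T"
      proof (cases "p \<in> S")
        case False then show ?thesis using S T_def by blast
      next
        case True
        obtain a b y where ab: "a \<noteq> 0" "\<forall>z\<in>A. a \<bullet> z \<le> b" "a \<bullet> p > b"
            "card {z\<in>A. a \<bullet> z = b} = ?D" "y \<in> convex hull {z\<in>A. a \<bullet> z = b}" "y \<in> closed_segment p x"
          using visible_facet[OF assms(4) Acurve full pnot x] by blast
        define \<tau> where "\<tau> = {z\<in>A. a \<bullet> z = b}"
        have vt: "vis \<tau>" unfolding vis_def \<tau>_def using ab by blast
        have tne: "\<tau> \<noteq> {}" using visA[OF vt] by blast
        have thyp: "\<forall>z\<in>\<tau>. a \<bullet> z = b" by (simp add: \<tau>_def)
        define Gc where "Gc = convex hull (insert p \<tau>)"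
        have GcT: "Gc \<in> T'" using T'(4) vt unfolding Gc_def F'_def G_def by blast
        have yT: "y \<in> convex hull \<tau>" using ab(5) \<tau>_def by simp
        have tA: "convex hull \<tau> \<subseteq> convex hull A" using visA(1)[OF vt] hull_mono by blast
        have yS: "y \<in> S" using closed_segment_subset[OF True S(2)] simpl[OF S(1)] ab(6) by blast
        have yG: "y \<in> Gc" using yT hull_mono[of \<tau> "insert p \<tau>"] Gc_def by blast
        have face: "(S \<inter> Gc) face_of S" using T'(1) S(1) GcT unfolding simplicial_complex_def by blast
        have axle: "a \<bullet> x \<le> b" using halfspace_hull[OF ab(2) x] .
        have xt: "x \<in> convex hull \<tau>"
        proof (cases "y = x")
          case True then show ?thesis using yT by simp
        next
          case False
          have "y \<noteq> p" using yT tA pnot by blast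
          then have "y \<in> open_segment p x" using ab(6) False unfolding open_segment_def by blast
          then have "x \<in> S \<inter> Gc" using face_ofD[OF face _ True S(2)] yS yG by blast
          then show ?thesis using cone_cut[OF tne thyp ab(3) _ axle] Gc_def by blast
        qed
        have Gge: "Gc \<subseteq> {z. a \<bullet> z \<ge> b}"
          unfolding Gc_def using thyp ab(3) by (intro hull_minimal) (auto simp: convex_halfspace_ge)
        have Geq: "Gc \<inter> {z. a \<bullet> z = b} = convex hull \<tau>"
        proof
          show "Gc \<inter> {z. a \<bullet> z = b} \<subseteq> convex hull \<tau>"
            using cone_cut[OF tne thyp ab(3)] Gc_def by force
          show "convex hull \<tau> \<subseteq> Gc \<inter> {z. a \<bullet> z = b}"
            using hull_mono[of \<tau> "insert p \<tau>"] Gc_def hyperplane_hull[OF thyp] by blast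
        qed
        have "(Gc \<inter> {z. a \<bullet> z = b}) face_of Gc"
          using Gge by (intro face_of_Int_supporting_hyperplane_ge) (auto simp: Gc_def)
        then have "convex hull \<tau> face_of Gc" using Geq by simp
        then have "convex hull \<tau> \<in> T'" using T'(1) GcT unfolding simplicial_complex_def by blast
        moreover have "p \<notin> convex hull \<tau>" using tA pnot by blast
        ultimately show ?thesis using xt T_def by blast
      qed
    qed
    have FT: "\<forall>\<sigma>\<in>F. convex hull \<sigma> \<in> T"
    proof
      fix \<sigma> assume sF: "\<sigma> \<in> F"
      have "convex hull \<sigma> \<in> T'" using T'(4) sF F'_def by blast
      moreover have "\<sigma> \<subseteq> A" using sF assms(3) by blast
      then have "convex hull \<sigma> \<subseteq> convex hull A" by (rule hull_mono)
      then have "p \<notin> convex hull \<sigma>" using pnot by blast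
      ultimately show "convex hull \<sigma> \<in> T" unfolding T_def by simp
    qed
    have UT: "\<Union>T = convex hull \<Union>F" using sub1 sub2 assms(3) by simp
    have "simplicial_complex T \<and> \<Union>T = convex hull \<Union>F \<and>
            (\<forall>S\<in>T. \<forall>v. v extreme_point_of S \<longrightarrow> v \<in> \<Union>F) \<and> (\<forall>\<sigma>\<in>F. convex hull \<sigma> \<in> T)"
      using scT UT extT FT by blast
    then have "\<not> non_extendable F"
      unfolding non_extendable_def by blast
    then show False using assms(6) by simp
  qed
  have "finite (\<Union>F')" using UF' assms(4) by simp
  moreover have "card (\<Union>F') = n + 1" using UF' assms(4,5) pA by simp
  ultimately show ?thesis
    using curveF' nonov nonext unfolding F'_def by blast
qed

end
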